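(* Consider $N\ge2$ agents $V=\{1,\dots,N\}$ with states evolving, with zero control input, according to $$\dot x_i(t)=\sum_{j\in\mathcal N_i}|a_{ij}(t)|\bigl(\operatorname{sgn}(a_{ij}(t))\,x_j(t)-x_i(t)\bigr),\qquad i\in V,$$ over a signed time-varying graph $\mathcal G_A(t)$ whose coefficients satisfy (A1)–(A3) below. Suppose $\mathcal G_A(t)$ is uniformly quasi strongly $\delta$-connected with constant $T>0$ such that, for every $t\ge t_0\ge0$, the condensation graph of $G_\delta[t,t+T)$ contains a fixed node set $S\subseteq V$ forming a strongly connected component, with a $\delta$-path in $G_\delta[t,t+T)$ from $S$ to every node of $R:=V\setminus S$. Let $h(t):=\max_{i\in R}|x_i(t)|$, $c(t):=\max_{i\in S}|x_i(t)|$, $N_s:=\operatorname{card}(S)$, and suppose that for almost all $t\ge t_0$ the inequalities $D^+h(t)\le M_0N_s(c(t)-h(t))$ and $D^+c(t)\le0$ hold. Let $s,k\in\mathbb{Z}_{\ge0}$ and $K:=kT$. Then for almost all $t\in[t_0+sK,\,t_0+(s+1)K]$, $$c(t)\le c(t_0+sK),\qquad h(t)\le h(t_0+sK)+c(t_0+sK).$$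
   Context: $\operatorname{sgn}$ is the sign function; $a_{ij}(t)$ is the signed influence of agent $j$ on agent $i$; $\mathcal N_i$ is the set of incoming neighbors of $i$; solutions are Carathéodory (absolutely continuous). $D^+h(t)=\limsup_{s\to0^+}\frac{h(t+s)-h(t)}{s}$ is the upper Dini derivative. Assumptions: (A1) each $a_{ij}(t)$ is piecewise continuous on every compact interval with discontinuity set of Lebesgue measure zero; (A2) $a_{ii}\equiv0$; (A3) there is $M_0>0$ with $\int_{t_1}^{t_2}|a_{ij}(s)|\,ds\le M_0(t_2-t_1)$ for all $t_1\le t_2$. Graph notions: for $\delta>0$, a $\delta$-arc from $j$ to $i$ on $[t_1,t_2)$ means $\int_{t_1}^{t_2}|a_{ij}(t)|\,dt\ge\delta(t_2-t_1)$; a $\delta$-path is a directed path of $\delta$-arcs; $G_\delta[t_1,t_2)$ is the digraph on $V$ of $\delta$-arcs on $[t_1,t_2)$; its condensation graph has the strongly connected components as nodes. Uniformly quasi strongly $\delta$-connected: there is $T>0$ such that for every $t\ge0$ the condensation graph of $G_\delta[t,t+T)$ has a root node with a $\delta$-path to every other node. *)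

theory Defs
  imports "HOL-Analysis.Analysis"
begin

definition abs_cont_on :: "real set \<Rightarrow> (real \<Rightarrow> real) \<Rightarrow> bool" where
  "abs_cont_on I f \<longleftrightarrow>
     (\<forall>\<epsilon>>0. \<exists>\<delta>>0. \<forall>(n::nat) (a::nat \<Rightarrow> real) b.
        (\<forall>k<n. a k \<le> b k \<and> a k \<in> I \<and> b k \<in> I) \<and>
        (\<forall>k<n. \<forall>l<n. k \<noteq> l \<longrightarrow> b k \<le> a l \<or> b l \<le> a k) \<and>
        (\<Sum>k<n. b k - a k) < \<delta>
        \<longrightarrow> (\<Sum>k<n. \<bar>f (b k) - f (a k)\<bar>) < \<epsilon>)"

definition dini_upper :: "(real \<Rightarrow> real) \<Rightarrow> real \<Rightarrow> ereal" where
  "dini_upper h t = Limsup (at_right 0) (\<lambda>s. ereal ((h (t + s) - h t) / s))"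

text \<open>Agents are V = {1..N}; a i j t is the signed influence of j on i.\<close>

definition A1 :: "nat \<Rightarrow> (nat \<Rightarrow> nat \<Rightarrow> real \<Rightarrow> real) \<Rightarrow> bool" where
  "A1 N a \<longleftrightarrow> (\<forall>i\<in>{1..N}. \<forall>j\<in>{1..N}. \<forall>t1 t2.
      negligible {t \<in> {t1..t2}. \<not> isCont (a i j) t})"

definition A2 :: "nat \<Rightarrow> (nat \<Rightarrow> nat \<Rightarrow> real \<Rightarrow> real) \<Rightarrow> bool" where
  "A2 N a \<longleftrightarrow> (\<forall>i\<in>{1..N}. \<forall>t. a i i t = 0)"

definition A3 :: "nat \<Rightarrow> (nat \<Rightarrow> nat \<Rightarrow> real \<Rightarrow> real) \<Rightarrow> real \<Rightarrow> bool" where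
  "A3 N a M0 \<longleftrightarrow> M0 > 0 \<and> (\<forall>i\<in>{1..N}. \<forall>j\<in>{1..N}. \<forall>t1 t2. t1 \<le> t2 \<longrightarrow>
      (\<lambda>s. \<bar>a i j s\<bar>) integrable_on {t1..t2} \<and>
      integral {t1..t2} (\<lambda>s. \<bar>a i j s\<bar>) \<le> M0 * (t2 - t1))"

text \<open>Right-hand side of the closed-loop dynamics (zero control input). The sum over
  the in-neighbours N_i equals the sum over V, since terms with a i j t = 0 vanish.\<close>
definition rhs :: "nat \<Rightarrow> (nat \<Rightarrow> nat \<Rightarrow> real \<Rightarrow> real) \<Rightarrow> (nat \<Rightarrow> real \<Rightarrow> real) \<Rightarrow> nat \<Rightarrow> real \<Rightarrow> real" where
  "rhs N a x i t = (\<Sum>j\<in>{1..N}. \<bar>a i j t\<bar> * (sgn (a i j t) * x j t - x i t))"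

definition caratheodory_solution ::
  "nat \<Rightarrow> (nat \<Rightarrow> nat \<Rightarrow> real \<Rightarrow> real) \<Rightarrow> (nat \<Rightarrow> real \<Rightarrow> real) \<Rightarrow> bool" where
  "caratheodory_solution N a x \<longleftrightarrow>
     (\<forall>i\<in>{1..N}. (\<forall>t1 t2. 0 \<le> t1 \<longrightarrow> abs_cont_on {t1..t2} (x i)) \<and>
        (AE t in lborel. 0 \<le> t \<longrightarrow> (x i has_real_derivative rhs N a x i t) (at t)))"

definition delta_arc :: "(nat \<Rightarrow> nat \<Rightarrow> real \<Rightarrow> real) \<Rightarrow> real \<Rightarrow> real \<Rightarrow> real \<Rightarrow> nat \<Rightarrow> nat \<Rightarrow> bool" where
  "delta_arc a \<delta> t1 t2 j i \<longleftrightarrow> integral {t1..t2} (\<lambda>t. \<bar>a i j t\<bar>) \<ge> \<delta> * (t2 - t1)"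

text \<open>Arc relation of G_delta[t1,t2) on V = {1..N} (pairs (j,i) = arc j \<rightarrow> i).\<close>
definition G_delta :: "nat \<Rightarrow> (nat \<Rightarrow> nat \<Rightarrow> real \<Rightarrow> real) \<Rightarrow> real \<Rightarrow> real \<Rightarrow> real \<Rightarrow> (nat \<times> nat) set" where
  "G_delta N a \<delta> t1 t2 = {(j, i). j \<in> {1..N} \<and> i \<in> {1..N} \<and> delta_arc a \<delta> t1 t2 j i}"

definition delta_path :: "nat \<Rightarrow> (nat \<Rightarrow> nat \<Rightarrow> real \<Rightarrow> real) \<Rightarrow> real \<Rightarrow> real \<Rightarrow> real \<Rightarrow> nat \<Rightarrow> nat \<Rightarrow> bool" where
  "delta_path N a \<delta> t1 t2 u v \<longleftrightarrow> (u, v) \<in> (G_delta N a \<delta> t1 t2)\<^sup>*"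

text \<open>C is a strongly connected component of G_delta[t1,t2) (a node of its condensation graph).\<close>
definition is_scc :: "nat \<Rightarrow> (nat \<Rightarrow> nat \<Rightarrow> real \<Rightarrow> real) \<Rightarrow> real \<Rightarrow> real \<Rightarrow> real \<Rightarrow> nat set \<Rightarrow> bool" where
  "is_scc N a \<delta> t1 t2 C \<longleftrightarrow> C \<noteq> {} \<and> C \<subseteq> {1..N} \<and>
     (\<forall>u\<in>C. \<forall>v\<in>C. delta_path N a \<delta> t1 t2 u v) \<and>
     (\<forall>u\<in>C. \<forall>v\<in>{1..N}. delta_path N a \<delta> t1 t2 u v \<and> delta_path N a \<delta> t1 t2 v u \<longrightarrow> v \<in> C)"

text \<open>Uniformly quasi strongly delta-connected with constant T: for every t \<ge> 0 the
  condensation graph of G_delta[t,t+T) has a root node (an SCC) with a delta-path to every node.\<close>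
definition uqs_delta_connected :: "nat \<Rightarrow> (nat \<Rightarrow> nat \<Rightarrow> real \<Rightarrow> real) \<Rightarrow> real \<Rightarrow> real \<Rightarrow> bool" where
  "uqs_delta_connected N a \<delta> T \<longleftrightarrow> T > 0 \<and>
     (\<forall>t\<ge>0. \<exists>C. is_scc N a \<delta> t (t + T) C \<and>
        (\<forall>v\<in>{1..N}. \<exists>u\<in>C. delta_path N a \<delta> t (t + T) u v))"

end

theory Submission
  imports Defs
begin


definition good :: "real set \<Rightarrow> nat \<Rightarrow> (nat \<Rightarrow> real) \<Rightarrow> (nat \<Rightarrow> real) \<Rightarrow> bool" where
  "good J n a b \<longleftrightarrow> (\<forall>k<n. a k \<le> b k \<and> a k \<in> J \<and> b k \<in> J) \<and>
        (\<forall>k<n. \<forall>l<n. k \<noteq> l \<longrightarrow> b k \<le> a l \<or> b l \<le> a k)"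

lemma ac_alt: "abs_cont_on J f \<longleftrightarrow> (\<forall>e>0. \<exists>d>0. \<forall>n a b. good J n a b \<and> (\<Sum>k<n. b k - a k) < d
   \<longrightarrow> (\<Sum>k<n. \<bar>f (b k) - f (a k)\<bar>) < e)"
  unfolding abs_cont_on_def good_def by (simp only: conj_assoc)

lemma ac_D:
  assumes "abs_cont_on J f" "e > 0"
  obtains d where "d > 0" "\<And>n a b. good J n a b \<Longrightarrow> (\<Sum>k<n. b k - a k) < d \<Longrightarrow> (\<Sum>k<n. \<bar>f (b k) - f (a k)\<bar>) < e"
proof -
  from assms have "\<exists>d>0. \<forall>n a b. good J n a b \<and> (\<Sum>k<n. b k - a k) < d
   \<longrightarrow> (\<Sum>k<n. \<bar>f (b k) - f (a k)\<bar>) < e" unfolding ac_alt by simp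
  then obtain d where "d > 0" and H: "\<forall>n a b. good J n a b \<and> (\<Sum>k<n. b k - a k) < d
   \<longrightarrow> (\<Sum>k<n. \<bar>f (b k) - f (a k)\<bar>) < e" by blast
  show ?thesis
  proof (rule that[OF \<open>d > 0\<close>])
    fix n a b assume "good J n a b" "(\<Sum>k<n. b k - a k) < d"
    then show "(\<Sum>k<n. \<bar>f (b k) - f (a k)\<bar>) < e" using H by simp
  qed
qed

lemma ac_I:
  assumes "\<And>e. e > 0 \<Longrightarrow> \<exists>d>0. \<forall>n a b. good J n a b \<and> (\<Sum>k<n. b k - a k) < d
   \<longrightarrow> (\<Sum>k<n. \<bar>f (b k) - f (a k)\<bar>) < e"
  shows "abs_cont_on J f"
  unfolding ac_alt using assms by simp

lemma good_subset: "good J n a b \<Longrightarrow> J \<subseteq> J' \<Longrightarrow> good J' n a b"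
  unfolding good_def by blast

lemma ac_subset:
  assumes JJ: "J' \<subseteq> J" and ac: "abs_cont_on J f" shows "abs_cont_on J' f"
proof (rule ac_I)
  fix e :: real assume e: "e > 0"
  obtain d where d: "d > 0" and H: "\<And>n a b. good J n a b \<Longrightarrow> (\<Sum>k<n. b k - a k) < d \<Longrightarrow> (\<Sum>k<n. \<bar>f (b k) - f (a k)\<bar>) < e"
    using ac_D[OF ac e] by blast
  have "\<forall>n a b. good J' n a b \<and> (\<Sum>k<n. b k - a k) < d
   \<longrightarrow> (\<Sum>k<n. \<bar>f (b k) - f (a k)\<bar>) < e"
  proof (intro allI impI)
    fix n a b assume "good J' n a b \<and> (\<Sum>k<n. b k - a k) < d"
    then show "(\<Sum>k<n. \<bar>f (b k) - f (a k)\<bar>) < e"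
      using H good_subset[OF _ JJ] by blast
  qed
  then show "\<exists>d>0. \<forall>n a b. good J' n a b \<and> (\<Sum>k<n. b k - a k) < d
   \<longrightarrow> (\<Sum>k<n. \<bar>f (b k) - f (a k)\<bar>) < e"
    using d by blast
qed

lemma ac_single:
  assumes "abs_cont_on J f" "e > 0"
  obtains d where "d > 0" "\<And>x y. x \<in> J \<Longrightarrow> y \<in> J \<Longrightarrow> x \<le> y \<Longrightarrow> y - x < d \<Longrightarrow> \<bar>f y - f x\<bar> < e"
proof -
  obtain d where d: "d > 0" and H: "\<And>n a b. good J n a b \<Longrightarrow> (\<Sum>k<n. b k - a k) < d \<Longrightarrow> (\<Sum>k<n. \<bar>f (b k) - f (a k)\<bar>) < e"
    using ac_D[OF assms] by blast
  show ?thesis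
  proof (rule that[OF d])
    fix x y assume "x \<in> J" "y \<in> J" "x \<le> y" "y - x < d"
    then show "\<bar>f y - f x\<bar> < e"
      using H[of 1 "\<lambda>_. x" "\<lambda>_. y"] by (simp add: good_def)
  qed
qed

lemma ac_cont:
  assumes "abs_cont_on {a..b} f"
  shows "continuous_on {a..b} f"
  unfolding continuous_on_iff
proof (intro ballI allI impI)
  fix x e assume x: "x \<in> {a..b}" and e: "(e::real) > 0"
  obtain d where d: "d > 0" and H: "\<And>x y. x \<in> {a..b} \<Longrightarrow> y \<in> {a..b} \<Longrightarrow> x \<le> y \<Longrightarrow> y - x < d \<Longrightarrow> \<bar>f y - f x\<bar> < e"
    using ac_single[OF assms e] by blast
  have "\<forall>x'\<in>{a..b}. dist x' x < d \<longrightarrow> dist (f x') (f x) < e"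
  proof (intro ballI impI)
    fix x' assume x': "x' \<in> {a..b}" and dd: "dist x' x < d"
    show "dist (f x') (f x) < e"
    proof (cases "x \<le> x'")
      case True
      then show ?thesis using H[OF x x' True] dd by (simp add: dist_real_def)
    next
      case False
      then have "\<bar>f x - f x'\<bar> < e" using H[OF x' x] dd by (simp add: dist_real_def)
      then show ?thesis by (simp add: dist_real_def abs_minus_commute)
    qed
  qed
  then show "\<exists>d>0. \<forall>x'\<in>{a..b}. dist x' x < d \<longrightarrow> dist (f x') (f x) < e"
    using d by blast
qed

lemma ac_dom:
  assumes fin: "finite I" and ac: "\<And>i. i \<in> I \<Longrightarrow> abs_cont_on J (f i)"
    and dom: "\<And>x y. x \<in> J \<Longrightarrow> y \<in> J \<Longrightarrow> \<bar>g y - g x\<bar> \<le> (\<Sum>i\<in>I. \<bar>f i y - f i x\<bar>)"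
  shows "abs_cont_on J g"
proof (rule ac_I)
  fix e :: real assume e: "e > 0"
  define e' where "e' = e / (real (card I) + 1)"
  have e': "e' > 0" using e by (simp add: e'_def)
  have "\<forall>i\<in>I. \<exists>d. d > 0 \<and> (\<forall>n a b. good J n a b \<and> (\<Sum>k<n. b k - a k) < d
   \<longrightarrow> (\<Sum>k<n. \<bar>f i (b k) - f i (a k)\<bar>) < e')"
    using ac e' unfolding ac_alt by blast
  then obtain D where D: "\<forall>i\<in>I. D i > 0 \<and> (\<forall>n a b. good J n a b \<and> (\<Sum>k<n. b k - a k) < D i
   \<longrightarrow> (\<Sum>k<n. \<bar>f i (b k) - f i (a k)\<bar>) < e')"
    by (rule bchoice[THEN exE]) 
  define d where "d = Min (insert 1 (D ` I))"
  have d: "d > 0" unfolding d_def using fin D by (subst Min_gr_iff) auto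
  have dle: "d \<le> D i" if "i \<in> I" for i unfolding d_def using fin that by (intro Min_le) auto
  show "\<exists>d>0. \<forall>n a b. good J n a b \<and> (\<Sum>k<n. b k - a k) < d
   \<longrightarrow> (\<Sum>k<n. \<bar>g (b k) - g (a k)\<bar>) < e"
  proof (intro exI[of _ d] conjI d allI impI)
    fix n :: nat and a b :: "nat \<Rightarrow> real"
    assume H: "good J n a b \<and> (\<Sum>k<n. b k - a k) < d"
    have "(\<Sum>k<n. \<bar>g (b k) - g (a k)\<bar>) \<le> (\<Sum>k<n. \<Sum>i\<in>I. \<bar>f i (b k) - f i (a k)\<bar>)"
      using H dom by (intro sum_mono) (auto simp: good_def)
    also have "\<dots> = (\<Sum>i\<in>I. \<Sum>k<n. \<bar>f i (b k) - f i (a k)\<bar>)"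
      by (rule sum.swap)
    also have "\<dots> \<le> (\<Sum>i\<in>I. e')"
    proof (rule sum_mono)
      fix i assume i: "i \<in> I"
      have "(\<Sum>k<n. b k - a k) < D i" using H dle[OF i] by linarith
      then show "(\<Sum>k<n. \<bar>f i (b k) - f i (a k)\<bar>) \<le> e'"
        using D i H by (meson less_imp_le)
    qed
    also have "\<dots> < e" using e by (simp add: e'_def field_simps)
    finally show "(\<Sum>k<n. \<bar>g (b k) - g (a k)\<bar>) < e" .
  qed
qed

lemma ac_linear: "abs_cont_on J (\<lambda>t. c * t + d)"
proof (rule ac_I)
  fix e :: real assume e: "e > 0"
  show "\<exists>d'>0. \<forall>n a b. good J n a b \<and> (\<Sum>k<n. b k - a k) < d'
        \<longrightarrow> (\<Sum>k<n. \<bar>(c * b k + d) - (c * a k + d)\<bar>) < e"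
  proof (intro exI[of _ "e / (\<bar>c\<bar> + 1)"] conjI allI impI)
    show "e / (\<bar>c\<bar> + 1) > 0" using e by simp
    fix n :: nat and a b :: "nat \<Rightarrow> real"
    assume H: "good J n a b \<and> (\<Sum>k<n. b k - a k) < e / (\<bar>c\<bar> + 1)"
    have "(\<Sum>k<n. \<bar>(c * b k + d) - (c * a k + d)\<bar>) = (\<Sum>k<n. \<bar>c\<bar> * (b k - a k))"
      using H by (intro sum.cong) (auto simp: abs_mult good_def simp flip: right_diff_distrib)
    also have "\<dots> = \<bar>c\<bar> * (\<Sum>k<n. b k - a k)" by (simp add: sum_distrib_left)
    also have "\<dots> \<le> (\<bar>c\<bar> + 1) * (\<Sum>k<n. b k - a k)"
      using H by (intro mult_right_mono sum_nonneg) (auto simp: good_def)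
    also have "\<dots> < (\<bar>c\<bar> + 1) * (e / (\<bar>c\<bar> + 1))"
      using H by (intro mult_strict_left_mono) auto
    also have "\<dots> = e" by simp
    finally show "(\<Sum>k<n. \<bar>(c * b k + d) - (c * a k + d)\<bar>) < e" .
  qed
qed

lemma negl_open:
  assumes "negligible E" "d > 0"
  obtains U where "open U" "E \<subseteq> U" "U \<in> lmeasurable" "measure lebesgue U < d"
proof -
  have "E \<in> sets lebesgue" using assms(1) by (simp add: negligible_imp_sets)
  then obtain T where T: "open T" "E \<subseteq> T" "(T - E) \<in> lmeasurable" "emeasure lebesgue (T - E) < ennreal d"
    using sets_lebesgue_outer_open[OF _ assms(2)] by blast
  have El: "E \<in> lmeasurable" using assms(1) by (simp add: negligible_imp_measurable)
  have TE: "T = (T - E) \<union> E" using T by blast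
  have Tl: "T \<in> lmeasurable" using TE T(3) El by (metis fmeasurable.Un)
  have "measure lebesgue T \<le> measure lebesgue (T - E) + measure lebesgue E"
    by (subst TE) (rule measure_Un_le, use T(3) El in auto)
  also have "measure lebesgue E = 0" using assms(1) by (simp add: negligible_imp_measure0)
  also have "measure lebesgue (T - E) < d"
    using T(3,4) assms(2) by (simp add: emeasure_eq_measure2 ennreal_less_iff)
  finally show ?thesis using that T Tl by auto
qed

lemma comp_facts:
  fixes V :: "real set"
  assumes V: "open V" "V \<subseteq> {a<..<b}" and C: "C \<in> components V"
  shows "Inf C < Sup C" "a \<le> Inf C" "Sup C \<le> b" "C \<subseteq> {Inf C..Sup C}" "{Inf C<..<Sup C} \<subseteq> C"
proof -
  have Cne: "C \<noteq> {}" using C in_components_nonempty by blast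
  have CV: "C \<subseteq> V" using C in_components_subset by blast
  have Co: "open C" using open_components[OF V(1) C] .
  have Ci: "is_interval C" using in_components_connected[OF C] is_interval_connected_1 by blast
  have bb: "bdd_below C" "bdd_above C" using CV V(2) by (auto intro!: bdd_belowI[of _ a] bdd_aboveI[of _ b])
  obtain x where x: "x \<in> C" using Cne by blast
  obtain r where r: "r > 0" "ball x r \<subseteq> C" using Co x open_contains_ball by blast
  have "x - r/2 \<in> C" "x + r/2 \<in> C" using r by (auto simp: dist_real_def intro!: subsetD[OF r(2)])
  then have "Inf C \<le> x - r/2" "x + r/2 \<le> Sup C" using bb by (auto intro: cInf_lower cSup_upper)
  then show "Inf C < Sup C" using r by linarith
  show "a \<le> Inf C" using Cne CV V(2) by (intro cInf_greatest) auto
  show "Sup C \<le> b" using Cne CV V(2) by (intro cSup_least) auto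
  show "C \<subseteq> {Inf C..Sup C}" using bb by (auto intro: cInf_lower cSup_upper)
  show "{Inf C<..<Sup C} \<subseteq> C"
  proof
    fix y assume y: "y \<in> {Inf C<..<Sup C}"
    then obtain c1 where "c1 \<in> C" "c1 < y" using cInf_less_iff[OF Cne bb(1)] by auto
    moreover obtain c2 where "c2 \<in> C" "y < c2" using y less_cSup_iff[OF Cne bb(2)] by auto
    ultimately show "y \<in> C" using Ci unfolding is_interval_1 by (meson less_imp_le)
  qed
qed

lemma comp_disj:
  fixes V :: "real set"
  assumes V: "open V" "V \<subseteq> {a<..<b}" and C: "C \<in> components V" and C': "C' \<in> components V"
    and ne: "C \<noteq> C'"
  shows "Sup C \<le> Inf C' \<or> Sup C' \<le> Inf C"
proof (rule ccontr)
  assume "\<not> ?thesis"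
  then have h: "Inf C' < Sup C" "Inf C < Sup C'" by auto
  note f = comp_facts[OF V C] and f' = comp_facts[OF V C']
  define m where "m = (max (Inf C) (Inf C') + min (Sup C) (Sup C')) / 2"
  have "m \<in> {Inf C<..<Sup C}" "m \<in> {Inf C'<..<Sup C'}" using h f(1) f'(1) unfolding m_def by auto
  then have "m \<in> C \<inter> C'" using f(5) f'(5) by blast
  moreover have "C \<inter> C' = {}" using pairwise_disjoint_components C C' ne unfolding pairwise_def by blast
  ultimately show False by blast
qed



lemma meas_Icc: "(x::real) \<le> y \<Longrightarrow> measure lebesgue {x..y} = y - x"
  by (simp add: measure_completion)
lemma meas_Ioo: "(x::real) \<le> y \<Longrightarrow> measure lebesgue {x<..<y} = y - x"
  by (simp add: measure_completion)

lemma luzin: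
  fixes g :: "real \<Rightarrow> real"
  assumes ac: "abs_cont_on {a..b} g" and E: "negligible E" "E \<subseteq> {a..b}"
  shows "negligible (g ` E)"
  unfolding negligible_outer_le
proof (intro allI impI)
  fix e :: real assume e: "e > 0"
  have cont: "continuous_on {a..b} g" using ac_cont[OF ac] .
  obtain d where d: "d > 0" and H: "\<And>n p q. good {a..b} n p q \<Longrightarrow> (\<Sum>k<n. q k - p k) < d \<Longrightarrow> (\<Sum>k<n. \<bar>g (q k) - g (p k)\<bar>) < e"
    using ac_D[OF ac e] by blast
  obtain U where U: "open U" "E \<subseteq> U" "U \<in> lmeasurable" "measure lebesgue U < d"
    using negl_open[OF E(1) d] by blast
  define V where "V = U \<inter> {a<..<b}"
  have Vo: "open V" "V \<subseteq> {a<..<b}" using U(1) by (auto simp: V_def)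
  define D where "D = components V"
  have Dopen: "\<And>C. C \<in> D \<Longrightarrow> open C" using open_components[OF Vo(1)] D_def by blast
  have Ddisj: "pairwise disjnt D" using pairwise_disjoint_components[of V]
    unfolding D_def pairwise_def disjnt_def by blast
  have Dc: "countable D" using countable_disjoint_open_subsets[OF Dopen Ddisj] .
  note cf = comp_facts[OF Vo, folded D_def]
  note cd = comp_disj[OF Vo, folded D_def]
  have "\<forall>C\<in>D. \<exists>pq. fst pq \<in> {Inf C..Sup C} \<and> snd pq \<in> {Inf C..Sup C} \<and>
      (\<forall>t\<in>{Inf C..Sup C}. g (fst pq) \<le> g t \<and> g t \<le> g (snd pq))"
  proof
    fix C assume C: "C \<in> D"
    have sub: "{Inf C..Sup C} \<subseteq> {a..b}" using cf(2,3)[OF C] by auto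
    have ne: "{Inf C..Sup C} \<noteq> {}" using cf(1)[OF C] by auto
    have cC: "continuous_on {Inf C..Sup C} g" using continuous_on_subset[OF cont sub] .
    obtain p where "p \<in> {Inf C..Sup C}" "\<forall>t\<in>{Inf C..Sup C}. g p \<le> g t"
      using continuous_attains_inf[OF compact_Icc ne cC] by blast
    moreover obtain q where "q \<in> {Inf C..Sup C}" "\<forall>t\<in>{Inf C..Sup C}. g t \<le> g q"
      using continuous_attains_sup[OF compact_Icc ne cC] by blast
    ultimately show "\<exists>pq. fst pq \<in> {Inf C..Sup C} \<and> snd pq \<in> {Inf C..Sup C} \<and>
      (\<forall>t\<in>{Inf C..Sup C}. g (fst pq) \<le> g t \<and> g t \<le> g (snd pq))"
      by (intro exI[of _ "(p, q)"]) auto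
  qed
  then obtain PQ where PQ: "\<forall>C\<in>D. fst (PQ C) \<in> {Inf C..Sup C} \<and> snd (PQ C) \<in> {Inf C..Sup C} \<and>
      (\<forall>t\<in>{Inf C..Sup C}. g (fst (PQ C)) \<le> g t \<and> g t \<le> g (snd (PQ C)))"
    by (rule bchoice[THEN exE])
  define p where "p C = fst (PQ C)" for C
  define q where "q C = snd (PQ C)" for C
  have pq: "p C \<in> {Inf C..Sup C}" "q C \<in> {Inf C..Sup C}"
     "\<And>t. t \<in> {Inf C..Sup C} \<Longrightarrow> g (p C) \<le> g t \<and> g t \<le> g (q C)" if "C \<in> D" for C
    using PQ that unfolding p_def q_def by auto
  have gpq: "g (p C) \<le> g (q C)" if "C \<in> D" for C using pq[OF that] by blast
  define W where "W = (\<lambda>C. {g (p C)..g (q C)}) ` D"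
  have Wc: "countable W" using Dc unfolding W_def by simp
  have Wm: "\<And>X. X \<in> W \<Longrightarrow> X \<in> lmeasurable" unfolding W_def by auto
  have bound: "measure lebesgue (\<Union>W') \<le> e" if W': "W' \<subseteq> W" "finite W'" for W'
  proof -
    obtain D' where D': "D' \<subseteq> D" "finite D'" "W' = (\<lambda>C. {g (p C)..g (q C)}) ` D'"
      using finite_subset_image[OF W'(2) W'(1)[unfolded W_def]] by blast
    have "measure lebesgue (\<Union>W') \<le> (\<Sum>C\<in>D'. measure lebesgue {g (p C)..g (q C)})"
      unfolding D'(3) by (rule measure_UNION_le[OF D'(2)]) auto
    also have "\<dots> = (\<Sum>C\<in>D'. g (q C) - g (p C))"
      proof (rule sum.cong[OF refl])
      fix C assume "C \<in> D'" then have "C \<in> D" using D'(1) by blast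
      then show "measure lebesgue {g (p C)..g (q C)} = g (q C) - g (p C)" using gpq meas_Icc by blast
    qed
    also have "\<dots> < e"
    proof -
      obtain n \<phi> where phi: "D' = \<phi> ` {i. i < (n::nat)}" "inj_on \<phi> {i. i < n}"
        using finite_imp_nat_seg_image_inj_on[OF D'(2)] by blast
      have phiD: "\<phi> k \<in> D" if "k < n" for k using phi(1) D'(1) that by blast
      define \<alpha> where "\<alpha> k = min (p (\<phi> k)) (q (\<phi> k))" for k
      define \<beta> where "\<beta> k = max (p (\<phi> k)) (q (\<phi> k))" for k
      have ab: "Inf (\<phi> k) \<le> \<alpha> k" "\<alpha> k \<le> \<beta> k" "\<beta> k \<le> Sup (\<phi> k)" if "k < n" for k
        using pq[OF phiD[OF that]] unfolding \<alpha>_def \<beta>_def by auto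
      have gd: "good {a..b} n \<alpha> \<beta>"
        unfolding good_def
      proof (intro conjI allI impI)
        fix k assume k: "k < n"
        show "\<alpha> k \<le> \<beta> k" using ab[OF k] by simp
        show "\<alpha> k \<in> {a..b}" "\<beta> k \<in> {a..b}" using ab[OF k] cf(2,3)[OF phiD[OF k]] by auto
      next
        fix k l assume k: "k < n" and l: "l < n" and kl: "k \<noteq> l"
        have "\<phi> k \<noteq> \<phi> l" using phi(2) k l kl unfolding inj_on_def by blast
        then have "Sup (\<phi> k) \<le> Inf (\<phi> l) \<or> Sup (\<phi> l) \<le> Inf (\<phi> k)"
          using cd[OF phiD[OF k] phiD[OF l]] by blast
        then show "\<beta> k \<le> \<alpha> l \<or> \<beta> l \<le> \<alpha> k" using ab[OF k] ab[OF l] by auto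
      qed
      have sumeq: "(\<Sum>k<n. F (\<phi> k)) = (\<Sum>C\<in>D'. F C)" for F :: "real set \<Rightarrow> real"
        using sum.reindex[OF phi(2), of F] phi(1) by (simp add: lessThan_def)
      have "(\<Sum>k<n. \<beta> k - \<alpha> k) \<le> (\<Sum>k<n. Sup (\<phi> k) - Inf (\<phi> k))"
        using ab by (intro sum_mono) fastforce
      also have "\<dots> = (\<Sum>C\<in>D'. Sup C - Inf C)" by (rule sumeq)
      also have "\<dots> = (\<Sum>C\<in>D'. measure lebesgue {Inf C<..<Sup C})"
        proof (rule sum.cong[OF refl])
        fix C assume "C \<in> D'" then have "C \<in> D" using D'(1) by blast
        then show "Sup C - Inf C = measure lebesgue {Inf C<..<Sup C}" using cf(1) meas_Ioo less_imp_le by metis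
      qed
      also have "\<dots> = measure lebesgue (\<Union>C\<in>D'. {Inf C<..<Sup C})"
      proof (rule measure_finite_Union[symmetric, OF D'(2)])
        show "(\<lambda>C. {Inf C<..<Sup C}) ` D' \<subseteq> sets lebesgue" by auto
        show "disjoint_family_on (\<lambda>C. {Inf C<..<Sup C}) D'"
          unfolding disjoint_family_on_def
        proof (intro ballI impI)
          fix C C' assume "C \<in> D'" "C' \<in> D'" "C \<noteq> C'"
          then have "Sup C \<le> Inf C' \<or> Sup C' \<le> Inf C" using cd D'(1) by blast
          then show "{Inf C<..<Sup C} \<inter> {Inf C'<..<Sup C'} = {}" by auto
        qed
        show "emeasure lebesgue {Inf C<..<Sup C} \<noteq> \<infinity>" if "C \<in> D'" for C
        proof -
          have "Inf C \<le> Sup C" using that D'(1) cf(1) less_imp_le by blast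
          then show ?thesis by simp
        qed
      qed
      also have "\<dots> \<le> measure lebesgue U"
      proof (rule measure_mono_fmeasurable[OF _ _ U(3)])
        show "(\<Union>C\<in>D'. {Inf C<..<Sup C}) \<subseteq> U"
          using D'(1) cf(5) in_components_subset unfolding D_def V_def by blast
        show "(\<Union>C\<in>D'. {Inf C<..<Sup C}) \<in> sets lebesgue"
          using D'(2) by (intro sets.finite_UN) auto
      qed
      finally have "(\<Sum>k<n. \<beta> k - \<alpha> k) < d" using U(4) by linarith
      then have "(\<Sum>k<n. \<bar>g (\<beta> k) - g (\<alpha> k)\<bar>) < e" using H[OF gd] by blast
      moreover have "(\<Sum>k<n. \<bar>g (\<beta> k) - g (\<alpha> k)\<bar>) = (\<Sum>k<n. g (q (\<phi> k)) - g (p (\<phi> k)))"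
        using gpq phiD unfolding \<alpha>_def \<beta>_def by (intro sum.cong refl) (auto simp: min_def max_def)
      ultimately show ?thesis using sumeq[of "\<lambda>C. g (q C) - g (p C)"] by simp
    qed
    finally show ?thesis by simp
  qed
  have UWm: "\<Union>W \<in> lmeasurable" and UWb: "measure lebesgue (\<Union>W) \<le> e"
    using fmeasurable_Union_bound[OF Wc Wm bound] measure_Union_bound[OF Wc Wm bound] by auto
  define T where "T = {g a, g b} \<union> \<Union>W"
  have sub: "g ` E \<subseteq> T"
  proof
    fix y assume "y \<in> g ` E"
    then obtain t where t: "t \<in> E" "y = g t" by blast
    show "y \<in> T"
    proof (cases "t = a \<or> t = b")
      case True then show ?thesis using t unfolding T_def by auto
    next
      case False
      then have "t \<in> V" using t E(2) U(2) unfolding V_def by auto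
      then obtain C where C: "C \<in> D" "t \<in> C" unfolding D_def using Union_components[of V] by blast
      then have "t \<in> {Inf C..Sup C}" using cf(4) by blast
      then have "y \<in> {g (p C)..g (q C)}" using pq(3)[OF C(1)] t by auto
      then show ?thesis using C unfolding T_def W_def by blast
    qed
  qed
  have fin: "{g a, g b} \<in> lmeasurable" "measure lebesgue {g a, g b} = 0"
    using negligible_imp_measure0[OF negligible_finite[of "{g a, g b}"]]
      negligible_imp_measurable[OF negligible_finite[of "{g a, g b}"]] by auto
  have Tm: "T \<in> lmeasurable" unfolding T_def using fin(1) UWm by (rule fmeasurable.Un)
  have "measure lebesgue T \<le> measure lebesgue {g a, g b} + measure lebesgue (\<Union>W)"
    unfolding T_def by (rule measure_Un_le) (use fin UWm in auto)
  then have "measure lebesgue T \<le> e" using fin UWb by linarith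
  then show "\<exists>T. g ` E \<subseteq> T \<and> T \<in> lmeasurable \<and> measure lebesgue T \<le> e"
    using sub Tm by blast
qed



lemma ac_mono_dini:
  fixes f :: "real \<Rightarrow> real"
  assumes ab: "a \<le> b" and ac: "abs_cont_on {a..b} f" and E: "negligible E"
    and W: "\<And>t e. t \<in> {a..<b} \<Longrightarrow> t \<notin> E \<Longrightarrow> e > 0 \<Longrightarrow>
              eventually (\<lambda>s. (f (t + s) - f t) / s < e) (at_right 0)"
  shows "f b \<le> f a"
proof (rule ccontr)
  assume "\<not> f b \<le> f a"
  then have fab: "f a < f b" by simp
  then have ab': "a < b" using ab by (cases "a = b") auto
  define \<epsilon> where "\<epsilon> = (f b - f a) / (2 * (b - a))"
  have \<epsilon>: "\<epsilon> > 0" using fab ab' by (simp add: \<epsilon>_def)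
  define g where "g t = f t - \<epsilon> * (t - a)" for t
  define fam where "fam i = (if i = (0::nat) then f else (\<lambda>t. (- \<epsilon>) * t + \<epsilon> * a))" for i
  have acg: "abs_cont_on {a..b} g"
  proof (rule ac_dom[of "{0, 1}" _ fam])
    show "finite {0::nat, 1}" by simp
    show "abs_cont_on {a..b} (fam i)" if "i \<in> {0::nat, 1}" for i
    proof (cases "i = 0")
      case True then show ?thesis using ac by (simp add: fam_def)
    next
      case False
      then have "fam i = (\<lambda>t. (- \<epsilon>) * t + \<epsilon> * a)" by (simp add: fam_def)
      then show ?thesis by (simp only: ac_linear)
    qed
    show "\<bar>g y - g x\<bar> \<le> (\<Sum>i\<in>{0::nat, 1}. \<bar>fam i y - fam i x\<bar>)" for x y
      by (simp add: fam_def g_def algebra_simps abs_triangle_ineq4)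
  qed
  have cg: "continuous_on {a..b} g" using ac_cont[OF acg] .
  define E' where "E' = E \<inter> {a..b}"
  have nE': "negligible (g ` E')"
    using luzin[OF acg _ ] E unfolding E'_def by (meson inf_le2 negligible_Int)
  have gab: "g a = f a" "g b = f b - (f b - f a) / 2"
    using ab' by (auto simp: g_def \<epsilon>_def field_simps)
  have gab': "g a < g b" using gab fab by (simp add: field_simps)
  have "\<not> {g a<..<g b} \<subseteq> g ` E'"
  proof
    assume "{g a<..<g b} \<subseteq> g ` E'"
    then have "negligible {g a<..<g b}" using nE' negligible_subset by blast
    then have "measure lebesgue {g a<..<g b} = 0" by (rule negligible_imp_measure0)
    then show False using meas_Ioo[of "g a" "g b"] gab' by simp
  qed
  then obtain y where y: "g a < y" "y < g b" "y \<notin> g ` E'" by (meson greaterThanLessThan_iff subsetI)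
  define A where "A = {t \<in> {a..b}. g t \<le> y}"
  have Acl: "closed A" unfolding A_def
    by (rule continuous_on_closed_Collect_le[OF cg continuous_on_const closed_atLeastAtMost])
  have aA: "a \<in> A" using y ab unfolding A_def by auto
  have Abdd: "bdd_above A" unfolding A_def by (auto intro: bdd_aboveI[of _ b])
  define ts where "ts = Sup A"
  have tsA: "ts \<in> A" unfolding ts_def using closed_contains_Sup[OF _ Abdd Acl] aA by blast
  have ts: "a \<le> ts" "ts \<le> b" "g ts \<le> y" using tsA unfolding A_def by auto
  have upper: "t \<le> ts" if "t \<in> A" for t using cSup_upper[OF that Abdd] ts_def by simp
  have gts: "g ts = y"
  proof (rule ccontr)
    assume "g ts \<noteq> y"
    then have "g ts \<le> y" "y \<le> g b" using ts y by auto
    moreover have "continuous_on {ts..b} g" using continuous_on_subset[OF cg] ts by auto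
    ultimately obtain t' where t': "ts \<le> t'" "t' \<le> b" "g t' = y" using IVT'[of g ts y b] ts by blast
    then have "t' \<in> A" using ts unfolding A_def by auto
    then have "t' = ts" using upper t' by force
    then show False using t' \<open>g ts \<noteq> y\<close> by simp
  qed
  have tsb: "ts < b" using gts y ts by (cases "ts = b") auto
  have tsE: "ts \<notin> E" using gts y(3) ts unfolding E'_def by auto
  have ev: "eventually (\<lambda>s. (f (ts + s) - f ts) / s < \<epsilon>) (at_right 0)"
    using W[of ts \<epsilon>] ts tsb tsE \<epsilon> by auto
  then obtain b1 where b1: "b1 > 0" "\<And>s. s > 0 \<Longrightarrow> s < b1 \<Longrightarrow> (f (ts + s) - f ts) / s < \<epsilon>"
    unfolding eventually_at_right_field by auto
  define s where "s = min b1 (b - ts) / 2"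
  have s: "s > 0" "s < b1" "s < b - ts" using b1 tsb by (auto simp: s_def)
  have "ts + s \<notin> A" using upper s by force
  then have "g (ts + s) > y" using s ts unfolding A_def by auto
  then have "f (ts + s) - f ts > \<epsilon> * s" using gts unfolding g_def by (simp add: algebra_simps)
  then have "(f (ts + s) - f ts) / s > \<epsilon>" using s by (simp add: field_simps)
  then show False using b1(2)[OF s(1,2)] by simp
qed



lemma maxabs_le:
  fixes x :: "nat \<Rightarrow> real \<Rightarrow> real"
  assumes "finite S" "S \<noteq> {}"
  shows "Max ((\<lambda>i. \<bar>x i v\<bar>) ` S) \<le> Max ((\<lambda>i. \<bar>x i u\<bar>) ` S) + (\<Sum>i\<in>S. \<bar>x i v - x i u\<bar>)"
proof -
  have "Max ((\<lambda>i. \<bar>x i v\<bar>) ` S) \<in> (\<lambda>i. \<bar>x i v\<bar>) ` S" using assms by (intro Max_in) auto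
  then obtain j where j: "j \<in> S" "Max ((\<lambda>i. \<bar>x i v\<bar>) ` S) = \<bar>x j v\<bar>" by auto
  have "\<bar>x j v\<bar> \<le> \<bar>x j u\<bar> + \<bar>x j v - x j u\<bar>" by linarith
  also have "\<bar>x j u\<bar> \<le> Max ((\<lambda>i. \<bar>x i u\<bar>) ` S)" using j assms by (intro Max_ge) auto
  also have "\<bar>x j v - x j u\<bar> \<le> (\<Sum>i\<in>S. \<bar>x i v - x i u\<bar>)"
    using j assms by (intro member_le_sum) auto
  finally show ?thesis using j by simp
qed

lemma maxabs_dom:
  fixes x :: "nat \<Rightarrow> real \<Rightarrow> real"
  assumes "finite S" "S \<noteq> {}"
  shows "\<bar>Max ((\<lambda>i. \<bar>x i v\<bar>) ` S) - Max ((\<lambda>i. \<bar>x i u\<bar>) ` S)\<bar> \<le> (\<Sum>i\<in>S. \<bar>x i v - x i u\<bar>)"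
proof -
  have "(\<Sum>i\<in>S. \<bar>x i u - x i v\<bar>) = (\<Sum>i\<in>S. \<bar>x i v - x i u\<bar>)" by (simp add: abs_minus_commute)
  then show ?thesis using maxabs_le[OF assms, of x v u] maxabs_le[OF assms, of x u v] by linarith
qed

lemma dini_W:
  assumes "dini_upper f t \<le> ereal B" "B < e"
  shows "eventually (\<lambda>s. (f (t + s) - f t) / s < e) (at_right 0)"
proof -
  have "Limsup (at_right 0) (\<lambda>s. ereal ((f (t + s) - f t) / s)) < ereal e"
  proof -
    have "ereal B < ereal e" using assms(2) by simp
    then show ?thesis using assms(1) unfolding dini_upper_def by (rule le_less_trans[rotated])
  qed
  from Limsup_lessD[OF this] show ?thesis by (rule eventually_mono) simp
qed

lemma ae_negl:
  assumes "AE t in lborel. P t"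
  obtains Z where "negligible Z" "\<And>t. t \<notin> Z \<Longrightarrow> P t"
proof -
  from assms obtain Z where Z: "{t \<in> space lborel. \<not> P t} \<subseteq> Z" "emeasure lborel Z = 0" "Z \<in> sets lborel"
    by (rule AE_E)
  have "Z \<in> null_sets lborel" using Z by auto
  then have "negligible Z" by (simp add: negligible_iff_null_sets null_sets_completionI)
  then show ?thesis using that Z(1) by auto
qed



theorem lemma3:
  fixes N :: nat and a :: "nat \<Rightarrow> nat \<Rightarrow> real \<Rightarrow> real" and x :: "nat \<Rightarrow> real \<Rightarrow> real"
    and M0 \<delta> T t0 :: real and S :: "nat set" and s k :: nat
  assumes N2: "N \<ge> 2"
    and A1: "A1 N a" and A2: "A2 N a" and A3: "A3 N a M0"
    and sol: "caratheodory_solution N a x"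
    and delta_pos: "\<delta> > 0"
    and uqs: "uqs_delta_connected N a \<delta> T"
    and t0: "t0 \<ge> 0"
    and Sscc: "\<forall>t\<ge>t0. is_scc N a \<delta> t (t + T) S \<and>
                 (\<forall>v\<in>{1..N} - S. \<exists>u\<in>S. delta_path N a \<delta> t (t + T) u v)"
    and dini_h: "AE t in lborel. t \<ge> t0 \<longrightarrow>
        dini_upper (\<lambda>\<tau>. Max ((\<lambda>i. \<bar>x i \<tau>\<bar>) ` ({1..N} - S))) t
          \<le> ereal (M0 * real (card S) *
               (Max ((\<lambda>i. \<bar>x i t\<bar>) ` S) - Max ((\<lambda>i. \<bar>x i t\<bar>) ` ({1..N} - S))))"
    and dini_c: "AE t in lborel. t \<ge> t0 \<longrightarrow>
        dini_upper (\<lambda>\<tau>. Max ((\<lambda>i. \<bar>x i \<tau>\<bar>) ` S)) t \<le> 0"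
  shows "AE t in lborel. t \<in> {t0 + real s * (real k * T) .. t0 + real (s + 1) * (real k * T)} \<longrightarrow>
           Max ((\<lambda>i. \<bar>x i t\<bar>) ` S) \<le> Max ((\<lambda>i. \<bar>x i (t0 + real s * (real k * T))\<bar>) ` S) \<and>
           Max ((\<lambda>i. \<bar>x i t\<bar>) ` ({1..N} - S))
             \<le> Max ((\<lambda>i. \<bar>x i (t0 + real s * (real k * T))\<bar>) ` ({1..N} - S))
               + Max ((\<lambda>i. \<bar>x i (t0 + real s * (real k * T))\<bar>) ` S)"
proof -
  have T: "T > 0" using uqs unfolding uqs_delta_connected_def by blast
  have M0: "M0 > 0" using A3 unfolding A3_def by blast
  have Ssc: "S \<noteq> {}" "S \<subseteq> {1..N}" using Sscc t0 unfolding is_scc_def by auto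
  have Sfin: "finite S" using Ssc(2) finite_subset by blast
  define R where "R = {1..N} - S"
  have Rfin: "finite R" unfolding R_def by simp
  define c where "c = (\<lambda>\<tau>. Max ((\<lambda>i. \<bar>x i \<tau>\<bar>) ` S))"
  define h where "h = (\<lambda>\<tau>. Max ((\<lambda>i. \<bar>x i \<tau>\<bar>) ` R))"
  define ts where "ts = t0 + real s * (real k * T)"
  have ts: "t0 \<le> ts" unfolding ts_def using T by simp
  have acx: "abs_cont_on {p..q} (x i)" if "i \<in> {1..N}" "0 \<le> p" for i p q
    using sol that unfolding caratheodory_solution_def by blast
  have acc: "abs_cont_on {p..q} c" if "0 \<le> p" for p q
  proof (rule ac_dom[of S _ x])
    show "finite S" by (rule Sfin)
    show "abs_cont_on {p..q} (x i)" if "i \<in> S" for i using acx[of i p q] that Ssc \<open>0 \<le> p\<close> by blast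
    show "\<bar>c v - c u\<bar> \<le> (\<Sum>i\<in>S. \<bar>x i v - x i u\<bar>)" for u v
      unfolding c_def by (rule maxabs_dom[OF Sfin Ssc(1)])
  qed
  have c_nonneg: "c \<tau> \<ge> 0" for \<tau>
  proof -
    obtain i where "i \<in> S" using Ssc by blast
    then have "\<bar>x i \<tau>\<bar> \<le> c \<tau>" unfolding c_def using Sfin by (intro Max_ge) auto
    then show ?thesis by linarith
  qed
  obtain Zc where Zc: "negligible Zc" "\<And>t. t \<notin> Zc \<Longrightarrow> t \<ge> t0 \<Longrightarrow> dini_upper c t \<le> 0"
    using ae_negl[OF dini_c] unfolding c_def by metis
  obtain Zh where Zh: "negligible Zh" "\<And>t. t \<notin> Zh \<Longrightarrow> t \<ge> t0 \<Longrightarrow>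
      dini_upper h t \<le> ereal (M0 * real (card S) * (c t - h t))"
    using ae_negl[OF dini_h] unfolding c_def h_def R_def by metis
  have part1: "c t \<le> c ts" if "ts \<le> t" for t
  proof (rule ac_mono_dini[OF that acc Zc(1)])
    show "0 \<le> ts" using ts t0 by linarith
    fix \<tau> e :: real assume "\<tau> \<in> {ts..<t}" "\<tau> \<notin> Zc" "e > 0"
    then have "dini_upper c \<tau> \<le> ereal 0" using Zc(2)[of \<tau>] ts by (simp add: zero_ereal_def)
    then show "eventually (\<lambda>s. (c (\<tau> + s) - c \<tau>) / s < e) (at_right 0)"
      using dini_W \<open>e > 0\<close> by blast
  qed
  have part2: "h t \<le> h ts + c ts" if "ts \<le> t" for t
  proof (cases "R = {}")
    case True
    then show ?thesis unfolding h_def using c_nonneg by simp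
  next
    case Rne: False
    define Mx where "Mx = max (h ts) (c ts)"
    define \<phi> where "\<phi> \<tau> = max (h \<tau>) Mx" for \<tau>
    have h_nonneg: "h \<tau> \<ge> 0" for \<tau>
    proof -
      obtain i where "i \<in> R" using Rne by blast
      then have "\<bar>x i \<tau>\<bar> \<le> h \<tau>" unfolding h_def using Rfin by (intro Max_ge) auto
      then show ?thesis by linarith
    qed
    have hdom: "\<bar>h v - h u\<bar> \<le> (\<Sum>i\<in>R. \<bar>x i v - x i u\<bar>)" for u v
      unfolding h_def by (rule maxabs_dom[OF Rfin Rne])
    have ach: "abs_cont_on {p..q} h" if "0 \<le> p" for p q
    proof (rule ac_dom[of R _ x])
      show "finite R" by (rule Rfin)
      show "abs_cont_on {p..q} (x i)" if "i \<in> R" for i using acx[of i p q] that \<open>0 \<le> p\<close>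
        unfolding R_def by blast
    qed (rule hdom)
    have acphi: "abs_cont_on {p..q} \<phi>" if "0 \<le> p" for p q
    proof (rule ac_dom[of R _ x])
      show "finite R" by (rule Rfin)
      show "abs_cont_on {p..q} (x i)" if "i \<in> R" for i using acx[of i p q] that \<open>0 \<le> p\<close>
        unfolding R_def by blast
      show "\<bar>\<phi> v - \<phi> u\<bar> \<le> (\<Sum>i\<in>R. \<bar>x i v - x i u\<bar>)" for u v
        using hdom[of v u] unfolding \<phi>_def by linarith
    qed
    have "\<phi> t \<le> \<phi> ts"
    proof (rule ac_mono_dini[OF that acphi Zh(1)])
      show "0 \<le> ts" using ts t0 by linarith
      fix \<tau> e :: real assume tau: "\<tau> \<in> {ts..<t}" "\<tau> \<notin> Zh" "e > 0"
      have tau0: "0 \<le> \<tau>" using tau ts t0 by auto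
      show "eventually (\<lambda>s. (\<phi> (\<tau> + s) - \<phi> \<tau>) / s < e) (at_right 0)"
      proof (cases "h \<tau> < Mx")
        case True
        obtain d where d: "d > 0" and dH: "\<And>u v. u \<in> {\<tau>..\<tau>+1} \<Longrightarrow> v \<in> {\<tau>..\<tau>+1} \<Longrightarrow> u \<le> v \<Longrightarrow> v - u < d \<Longrightarrow> \<bar>h v - h u\<bar> < Mx - h \<tau>"
          using ac_single[OF ach[OF tau0, of "\<tau> + 1"], of "Mx - h \<tau>"] True by auto
        show ?thesis unfolding eventually_at_right_field
        proof (intro exI[of _ "min d 1"] conjI allI impI)
          show "min d 1 > (0::real)" using d by simp
          fix s :: real assume s: "0 < s" "s < min d 1"
          then have "\<bar>h (\<tau> + s) - h \<tau>\<bar> < Mx - h \<tau>" using dH[of \<tau> "\<tau> + s"] by auto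
          then have "\<phi> (\<tau> + s) = Mx" "\<phi> \<tau> = Mx" using True unfolding \<phi>_def by auto
          then show "(\<phi> (\<tau> + s) - \<phi> \<tau>) / s < e" using tau by simp
        qed
      next
        case False
        have "c \<tau> \<le> c ts" using part1 tau by auto
        then have "c \<tau> - h \<tau> \<le> 0" using False unfolding Mx_def by linarith
        then have "M0 * real (card S) * (c \<tau> - h \<tau>) \<le> 0"
          using M0 by (simp add: mult_nonneg_nonpos)
        moreover have "dini_upper h \<tau> \<le> ereal (M0 * real (card S) * (c \<tau> - h \<tau>))"
          using Zh(2)[of \<tau>] tau ts by auto
        ultimately have ev: "eventually (\<lambda>s. (h (\<tau> + s) - h \<tau>) / s < e) (at_right 0)"
          using dini_W[of h \<tau> "M0 * real (card S) * (c \<tau> - h \<tau>)" e] tau by linarith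
        have pos: "eventually (\<lambda>s. s > (0::real)) (at_right 0)"
          by (simp add: eventually_at_right_less)
        show ?thesis using ev pos
        proof eventually_elim
          case (elim s)
          show ?case
          proof (cases "h (\<tau> + s) - h \<tau> \<le> 0")
            case True
            then have "\<phi> (\<tau> + s) - \<phi> \<tau> \<le> 0" using False unfolding \<phi>_def by auto
            then have "(\<phi> (\<tau> + s) - \<phi> \<tau>) / s \<le> 0" using elim by (simp add: divide_nonpos_pos)
            then show ?thesis using tau by linarith
          next
            case False2: False
            then have "\<phi> (\<tau> + s) - \<phi> \<tau> \<le> h (\<tau> + s) - h \<tau>" using False unfolding \<phi>_def by auto
            then have "(\<phi> (\<tau> + s) - \<phi> \<tau>) / s \<le> (h (\<tau> + s) - h \<tau>) / s"
              using elim by (intro divide_right_mono) auto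
            then show ?thesis using elim by linarith
          qed
        qed
      qed
    qed
    then have "h t \<le> Mx" unfolding \<phi>_def Mx_def by auto
    moreover have "Mx \<le> h ts + c ts" unfolding Mx_def using h_nonneg[of ts] c_nonneg[of ts] by linarith
    ultimately show ?thesis by linarith
  qed
  show ?thesis
  proof (rule AE_I2, intro impI)
    fix t assume "t \<in> {t0 + real s * (real k * T)..t0 + real (s + 1) * (real k * T)}"
    then have "ts \<le> t" unfolding ts_def by simp
    then show "Max ((\<lambda>i. \<bar>x i t\<bar>) ` S) \<le> Max ((\<lambda>i. \<bar>x i (t0 + real s * (real k * T))\<bar>) ` S) \<and>
           Max ((\<lambda>i. \<bar>x i t\<bar>) ` ({1..N} - S))
             \<le> Max ((\<lambda>i. \<bar>x i (t0 + real s * (real k * T))\<bar>) ` ({1..N} - S))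
               + Max ((\<lambda>i. \<bar>x i (t0 + real s * (real k * T))\<bar>) ` S)"
      using part1 part2 unfolding c_def h_def R_def ts_def by blast
  qed
qed

end
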